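(* Let $S$ be a semigroup generated by a set $A$ and let $T$ be a subsemigroup of $S$ generated by a set $B$ and having finite Green index $n$ in $S$. Let $s\in S$ and $a_1,\ldots,a_{m+k}\in A$, and suppose that the elements $sa_1\cdots a_{m+1}, sa_1\cdots a_{m+2},\ldots, sa_1\cdots a_{m+k}$ together lie in at least $n$ distinct $\mathcal{R}^T$-classes. Then there exist $i$ with $m<i\le m+k$ and $b_1,\ldots,b_j\in B$ such that $sa_1\cdots a_i=b_1\cdots b_j$.
   Context: For a subsemigroup $T$ of a semigroup $S$, the relative Green's relations on $S$ are: $u\,\mathcal{R}^T v$ iff $uT^1=vT^1$, $u\,\mathcal{L}^T v$ iff $T^1u=T^1v$, and $\mathcal{H}^T=\mathcal{R}^T\cap\mathcal{L}^T$, where $T^1=T\cup\{1\}$. The Green index of $T$ in $S$ is one plus the number of $\mathcal{H}^T$-classes contained in $S\setminus T$. *)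

theory Defs
  imports Main
begin

inductive_set gen :: "'a::semigroup_mult set \<Rightarrow> 'a set" for X where
  gen_base: "x \<in> X \<Longrightarrow> x \<in> gen X"
| gen_mult: "x \<in> gen X \<Longrightarrow> y \<in> gen X \<Longrightarrow> x * y \<in> gen X"

text \<open>Product of a nonempty word x0 x1 ... xr, given as head and tail list.\<close>
definition wprod :: "'a::semigroup_mult \<Rightarrow> 'a list \<Rightarrow> 'a" where
  "wprod x xs = foldl (*) x xs"

definition rideal :: "'a::semigroup_mult set \<Rightarrow> 'a \<Rightarrow> 'a set" where
  "rideal T u = insert u ((\<lambda>t. u * t) ` T)"

definition lideal :: "'a::semigroup_mult set \<Rightarrow> 'a \<Rightarrow> 'a set" where
  "lideal T u = insert u ((\<lambda>t. t * u) ` T)"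

definition relR :: "'a::semigroup_mult set \<Rightarrow> 'a set \<Rightarrow> 'a rel" where
  "relR S T = {(u, v). u \<in> S \<and> v \<in> S \<and> rideal T u = rideal T v}"

definition relL :: "'a::semigroup_mult set \<Rightarrow> 'a set \<Rightarrow> 'a rel" where
  "relL S T = {(u, v). u \<in> S \<and> v \<in> S \<and> lideal T u = lideal T v}"

definition relH :: "'a::semigroup_mult set \<Rightarrow> 'a set \<Rightarrow> 'a rel" where
  "relH S T = relR S T \<inter> relL S T"

definition finite_green_index :: "'a::semigroup_mult set \<Rightarrow> 'a set \<Rightarrow> nat \<Rightarrow> bool" where
  "finite_green_index S T n \<longleftrightarrow>
     (let Cs = {C \<in> S // relH S T. C \<subseteq> S - T} in finite Cs \<and> n = 1 + card Cs)"

end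

theory Submission
  imports Defs
begin

lemma foldl_mult_assoc: "foldl (*) (x * y) zs = (x::'a::semigroup_mult) * foldl (*) y zs"
  by (induction zs arbitrary: y) (auto simp: mult.assoc)

lemma wprod_append: "wprod b bs * wprod c cs = wprod b (bs @ c # cs)"
  unfolding wprod_def by (simp add: foldl_mult_assoc)

lemma gen_wprod: "x \<in> gen B \<Longrightarrow> \<exists>b bs. b \<in> B \<and> set bs \<subseteq> B \<and> x = wprod b bs"
proof (induction rule: gen.induct)
  case (gen_base x)
  then show ?case by (rule_tac x=x in exI, rule_tac x="[]" in exI) (simp add: wprod_def)
next
  case (gen_mult x y)
  then obtain b bs c cs where "b \<in> B" "set bs \<subseteq> B" "x = wprod b bs"
     "c \<in> B" "set cs \<subseteq> B" "y = wprod c cs" by blast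
  then show ?case using wprod_append[of b bs c cs]
    by (rule_tac x=b in exI, rule_tac x="bs @ c # cs" in exI) auto
qed

lemma wprod_gen: "s \<in> gen A \<Longrightarrow> set xs \<subseteq> A \<Longrightarrow> wprod s xs \<in> gen A"
proof (induction xs arbitrary: s)
  case Nil then show ?case by (simp add: wprod_def)
next
  case (Cons a xs)
  have "s * a \<in> gen A" using Cons by (auto intro: gen.intros)
  then show ?case using Cons by (simp add: wprod_def)
qed

theorem mainTheorem16:
  fixes S T A B :: "'a::semigroup_mult set" and n m k :: nat and s :: 'a and as :: "'a list"
  assumes "S = gen A"
    and "T \<subseteq> S" and "T = gen B"
    and "finite_green_index S T n"
    and "s \<in> S"
    and "length as = m + k" and "set as \<subseteq> A"
    and "card ((\<lambda>x. relR S T `` {x}) ` {wprod s (take i as) | i. m < i \<and> i \<le> m + k}) \<ge> n"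
  shows "\<exists>i. m < i \<and> i \<le> m + k \<and>
           (\<exists>b bs. b \<in> B \<and> set bs \<subseteq> B \<and> wprod s (take i as) = wprod b bs)"
proof (rule ccontr)
  assume neg: "\<not> ?thesis"
  define P where "P = {wprod s (take i as) | i. m < i \<and> i \<le> m + k}"
  define Cs where "Cs = {C \<in> S // relH S T. C \<subseteq> S - T}"
  have fin: "finite Cs" and nCs: "n = 1 + card Cs"
    using assms(4) unfolding finite_green_index_def Cs_def Let_def by auto
  have PS: "x \<in> S" if "x \<in> P" for x
    using that assms(1,5,7) set_take_subset[of _ as] unfolding P_def
    by (auto intro!: wprod_gen)
  have PT: "x \<notin> T" if "x \<in> P" for x
    using that neg gen_wprod assms(3) unfolding P_def by blast
  have Tmul: "u * t \<in> T" if "u \<in> T" "t \<in> T" for u t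
    using that assms(3) by (auto intro: gen.intros)
  define h where "h x = relH S T `` {x}" for x
  have hC: "h x \<in> Cs" if "x \<in> P" for x
  proof -
    have "h x \<in> S // relH S T" unfolding h_def using PS[OF that] by (rule quotientI)
    moreover have "h x \<subseteq> S - T"
    proof
      fix y assume y: "y \<in> h x"
      then have yS: "y \<in> S" and eq: "rideal T x = rideal T y"
        unfolding h_def relH_def relR_def by auto
      have "y \<notin> T"
      proof
        assume "y \<in> T"
        have "x \<in> rideal T y" using eq unfolding rideal_def by auto
        then have "x \<in> T" using \<open>y \<in> T\<close> Tmul unfolding rideal_def by auto
        then show False using PT[OF that] by simp
      qed
      then show "y \<in> S - T" using yS by simp
    qed
    ultimately show ?thesis unfolding Cs_def by simp
  qed
  have geq: "relR S T `` {x} = Image (relR S T) (h x)" if "x \<in> P" for x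
    using PS[OF that] unfolding h_def relH_def relR_def relL_def by auto
  have "(\<lambda>x. relR S T `` {x}) ` P = Image (relR S T) ` (h ` P)"
    using geq by (auto simp: image_iff)
  then have "card ((\<lambda>x. relR S T `` {x}) ` P) \<le> card (h ` P)"
    using card_image_le fin hC by (metis finite_subset image_subsetI)
  also have "\<dots> \<le> card Cs" using hC fin by (intro card_mono) auto
  finally show False using assms(8) nCs unfolding P_def by simp
qed

end
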